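(* Let $n\ge2$, let $\mathbb{F}$ be an algebraic extension of a prime field and let $p$ be an odd prime. (i) If $\mathrm{char}(\mathbb{F})$ is $0$, or $\mathrm{char}(\mathbb{F})=p$ with $\gcd(n,p)=1$, then $\mathrm{Der}(\mathbb{F}T_{4n})=\mathrm{Der}_{\mathrm{inn}}(\mathbb{F}T_{4n})$. (ii) If $\mathrm{char}(\mathbb{F})=p$ with $\gcd(n,p)\ne1$, then $\mathrm{Der}_{\mathrm{inn}}(\mathbb{F}T_{4n})\subsetneq\mathrm{Der}(\mathbb{F}T_{4n})$, i.e. $\mathbb{F}T_{4n}$ has a derivation that is not inner.
   Context: $T_{4n}=\langle a,b\mid a^{2n}=1,\ a^n=b^2,\ b^{-1}ab=a^{-1}\rangle$ is the dicyclic group of order $4n$; $\mathbb{F}T_{4n}$ is its group algebra. A derivation of a ring $R$ is a map $d:R\to R$ with $d(x+y)=d(x)+d(y)$ and $d(xy)=d(x)y+xd(y)$; $\mathrm{Der}(R)$ is the set of all derivations. An inner derivation is one of the form $d_\beta(\alpha)=\alpha\beta-\beta\alpha$ for fixed $\beta\in R$; $\mathrm{Der}_{\mathrm{inn}}(R)$ is the set of inner derivations. *)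

theory Defs
  imports Main "HOL-Library.FuncSet" "HOL-Computational_Algebra.Polynomial"
begin

text \<open>Concrete model of the dicyclic group T_{4n}: the pair (i,e) with
  i < 2n, e < 2 stands for a^i b^e.  Using b^{-1} a b = a^{-1} (so b a^j = a^{-j} b)
  and b^2 = a^n:  a^i b^e a^j b^f = a^(i +/- j + [e=f=1] n) b^(e+f mod 2).\<close>

definition dic_carrier :: "nat \<Rightarrow> (nat \<times> nat) set" where
  "dic_carrier n = {0..<2*n} \<times> {0..<2}"

definition dic_mult :: "nat \<Rightarrow> nat \<times> nat \<Rightarrow> nat \<times> nat \<Rightarrow> nat \<times> nat" where
  "dic_mult n x y =
     (case x of (i, e) \<Rightarrow> case y of (j, f) \<Rightarrow>
       (((if e = 0 then i + j else i + (2*n - j)) + (if e = 1 \<and> f = 1 then n else 0)) mod (2*n),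
        (e + f) mod 2))"

definition ga_carrier :: "nat \<Rightarrow> (nat \<times> nat \<Rightarrow> 'a::field) set" where
  "ga_carrier n = {f. \<forall>z. z \<notin> dic_carrier n \<longrightarrow> f z = 0}"

definition ga_add :: "(nat \<times> nat \<Rightarrow> 'a::field) \<Rightarrow> (nat \<times> nat \<Rightarrow> 'a) \<Rightarrow> (nat \<times> nat \<Rightarrow> 'a)" where
  "ga_add f g = (\<lambda>z. f z + g z)"

definition ga_sub :: "(nat \<times> nat \<Rightarrow> 'a::field) \<Rightarrow> (nat \<times> nat \<Rightarrow> 'a) \<Rightarrow> (nat \<times> nat \<Rightarrow> 'a)" where
  "ga_sub f g = (\<lambda>z. f z - g z)"

definition ga_mult :: "nat \<Rightarrow> (nat \<times> nat \<Rightarrow> 'a::field) \<Rightarrow> (nat \<times> nat \<Rightarrow> 'a) \<Rightarrow> (nat \<times> nat \<Rightarrow> 'a)" where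
  "ga_mult n f g = (\<lambda>z. \<Sum>x\<in>dic_carrier n. \<Sum>y\<in>dic_carrier n.
                          if dic_mult n x y = z then f x * g y else 0)"

definition Der :: "nat \<Rightarrow> ((nat \<times> nat \<Rightarrow> 'a::field) \<Rightarrow> (nat \<times> nat \<Rightarrow> 'a)) set" where
  "Der n = {d \<in> extensional (ga_carrier n).
      (\<forall>x\<in>ga_carrier n. d x \<in> ga_carrier n) \<and>
      (\<forall>x\<in>ga_carrier n. \<forall>y\<in>ga_carrier n. d (ga_add x y) = ga_add (d x) (d y)) \<and>
      (\<forall>x\<in>ga_carrier n. \<forall>y\<in>ga_carrier n.
          d (ga_mult n x y) = ga_add (ga_mult n (d x) y) (ga_mult n x (d y)))}"

definition Der_inn :: "nat \<Rightarrow> ((nat \<times> nat \<Rightarrow> 'a::field) \<Rightarrow> (nat \<times> nat \<Rightarrow> 'a)) set" where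
  "Der_inn n = {restrict (\<lambda>\<alpha>. ga_sub (ga_mult n \<alpha> \<beta>) (ga_mult n \<beta> \<alpha>)) (ga_carrier n)
                 | \<beta>. \<beta> \<in> ga_carrier n}"

definition prime_subfield :: "'a::field set" where
  "prime_subfield = {of_int a / of_int b | a b. of_int b \<noteq> (0::'a)}"

definition algebraic_over_prime_field :: "'a::field itself \<Rightarrow> bool" where
  "algebraic_over_prime_field _ \<longleftrightarrow>
     (\<forall>x::'a. \<exists>p::'a poly. p \<noteq> 0 \<and> (\<forall>i. coeff p i \<in> prime_subfield) \<and> poly p x = 0)"

end

theory Submission
  imports Defs "HOL-Computational_Algebra.Primes" "HOL-Library.Function_Algebras"
begin

lemma ps_of_int: "of_int k \<in> (prime_subfield :: 'a::field set)"
  unfolding prime_subfield_def by (rule CollectI, rule exI[of _ k], rule exI[of _ 1]) simp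

lemma ps_mult_nat:
  assumes "c \<in> (prime_subfield :: 'a::field set)"
  shows "of_nat m * c \<in> prime_subfield"
proof -
  from assms obtain a b where c: "c = of_int a / of_int b" "of_int b \<noteq> (0::'a)"
    unfolding prime_subfield_def by blast
  have "of_nat m * c = of_int (int m * a) / of_int b" using c by simp
  thus ?thesis using c unfolding prime_subfield_def by blast
qed

locale fder =
  fixes D :: "'a::field \<Rightarrow> 'a"
  assumes add: "\<And>x y. D (x + y) = D x + D y"
    and mul: "\<And>x y. D (x * y) = x * D y + y * D x"
begin

lemma zero: "D 0 = 0" using add[of 0 0] by (metis add.right_neutral add_left_cancel)

lemma one: "D 1 = 0" using mul[of 1 1] by (metis mult_1 mult_1_right add.right_neutral add_left_cancel)

lemma dneg: "D (- x) = - D x" using add[of x "-x"] zero by (simp add: eq_neg_iff_add_eq_0 add.commute)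

lemma of_nat: "D (of_nat k) = 0"
  by (induction k) (simp_all add: zero add one)

lemma of_int: "D (of_int k) = 0"
proof (cases k rule: int_cases)
  case (neg m)
  have "(of_int k :: 'a) = - of_nat (Suc m)" using neg by simp
  then show ?thesis using dneg[of "of_nat (Suc m)"] of_nat[of "Suc m"] by simp
qed (simp add: of_nat)

lemma ps: assumes "c \<in> prime_subfield" shows "D c = 0"
proof -
  from assms obtain a b where c: "c = of_int a / of_int b" "of_int b \<noteq> (0::'a)"
    unfolding prime_subfield_def by blast
  have "D (of_int b * c) = of_int b * D c + c * D (of_int b)" by (rule mul)
  moreover have "of_int b * c = of_int a" using c by simp
  ultimately show ?thesis using c by (simp add: of_int)
qed

lemma poly_rule: assumes "\<forall>i. coeff q i \<in> prime_subfield"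
  shows "D (poly q x) = poly (pderiv q) x * D x"
  using assms
proof (induction q rule: pCons_induct)
  case 0 then show ?case by (simp add: zero)
next
  case (pCons a q)
  have a: "a \<in> prime_subfield" using pCons.prems[rule_format, of 0] by simp
  have q: "\<forall>i. coeff q i \<in> prime_subfield" using pCons.prems[rule_format, of "Suc i" for i] by simp
  have "D (poly (pCons a q) x) = D a + D (x * poly q x)" by (simp add: add)
  also have "\<dots> = x * (poly (pderiv q) x * D x) + poly q x * D x"
    using pCons.IH[OF q] ps[OF a] by (simp add: mul)
  also have "\<dots> = poly (pderiv (pCons a q)) x * D x"
    by (simp add: pderiv_pCons distrib_right mult.assoc)
  finally show ?case .
qed

end

lemma frob_ps:
  fixes c :: "'a::field"
  assumes "prime CHAR('a)" "c \<in> prime_subfield"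
  shows "c ^ CHAR('a) = c"
proof -
  have nat: "(of_nat k :: 'a) ^ CHAR('a) = of_nat k" for k
  proof (induction k)
    case 0 then show ?case using assms(1) by (simp add: power_0_left prime_gt_0_nat)
  next
    case (Suc k)
    have "(of_nat (Suc k) :: 'a) ^ CHAR('a) = (of_nat k + 1) ^ CHAR('a)" by (simp add: add.commute)
    also have "\<dots> = of_nat k ^ CHAR('a) + 1 ^ CHAR('a)" by (rule freshmans_dream[OF assms(1) refl])
    also have "\<dots> = of_nat k + 1" using Suc by simp
    finally show ?case by simp
  qed
  have int: "(of_int k :: 'a) ^ CHAR('a) = of_int k" for k
  proof (cases k rule: int_cases)
    case (nonneg m) then show ?thesis using nat by simp
  next
    case (neg m)
    have "(of_int k :: 'a) = - of_nat (Suc m)" using neg by simp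
    then show ?thesis using nat[of "Suc m"] minus_power_prime_CHAR[OF refl assms(1), of "of_nat (Suc m)"] by (simp only:)
  qed
  from assms(2) obtain a b where c: "c = of_int a / of_int b"
    unfolding prime_subfield_def by blast
  show ?thesis using int c by (simp add: power_divide)
qed

lemma field_der_zero:
  fixes D :: "'a::field \<Rightarrow> 'a"
  assumes "fder D"
    and alg: "algebraic_over_prime_field TYPE('a)"
    and ch: "CHAR('a) = 0 \<or> prime CHAR('a)"
  shows "D x = 0"
proof -
  interpret fder D by fact
  define S where "S = {q :: 'a poly. q \<noteq> 0 \<and> (\<forall>i. coeff q i \<in> prime_subfield) \<and> poly q x = 0}"
  have ne: "\<exists>q. q \<in> S"
  proof -
    from alg obtain q :: "'a poly" where "q \<noteq> 0 \<and> (\<forall>i. coeff q i \<in> prime_subfield) \<and> poly q x = 0"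
      unfolding algebraic_over_prime_field_def by blast
    then show ?thesis unfolding S_def by blast
  qed
  from ne obtain q1 where "q1 \<in> S" by blast
  from ex_has_least_nat[of "\<lambda>q. q \<in> S", OF this, of degree]
  obtain q where qS: "q \<in> S" and qmin': "\<forall>r. r \<in> S \<longrightarrow> degree q \<le> degree r" by blast
  have qmin: "degree q \<le> degree r" if "r \<in> S" for r using qmin' that by blast
  have q0: "q \<noteq> 0" and qc: "\<forall>i. coeff q i \<in> prime_subfield" and qx: "poly q x = 0"
    using qS unfolding S_def by auto
  have dpos: "degree q > 0"
  proof (rule ccontr)
    assume "\<not> degree q > 0"
    then have "degree q = 0" by simp
    then obtain c where c: "q = [:c:]" using degree0_coeffs by blast
    then have "c = 0" using qx by simp
    then show False using q0 c by simp
  qed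
  have dc: "\<forall>i. coeff (pderiv q) i \<in> prime_subfield"
    unfolding coeff_pderiv using qc by (blast intro: ps_mult_nat)
  have dlt: "degree (pderiv q) < degree q"
  proof -
    have "degree (pderiv q) \<le> degree q - 1"
      by (rule degree_le) (auto simp: coeff_pderiv coeff_eq_0)
    thus ?thesis using dpos by linarith
  qed
  have lc: "coeff q (degree q) \<noteq> 0" using q0 by simp
  show ?thesis
  proof (cases "poly (pderiv q) x = 0")
    case False
    have "D (poly q x) = poly (pderiv q) x * D x" by (rule poly_rule[OF qc])
    thus ?thesis using qx False zero by simp
  next
    case True
    have pd0: "pderiv q = 0"
    proof (rule ccontr)
      assume "pderiv q \<noteq> 0"
      then have "pderiv q \<in> S" using True dc unfolding S_def by blast
      from qmin[OF this] dlt show False by simp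
    qed
    show ?thesis
    proof (cases "CHAR('a) = 0")
      case True
      have "coeff (pderiv q) (degree q - 1) = of_nat (degree q) * coeff q (degree q)"
        using dpos by (simp add: coeff_pderiv)
      moreover have "(of_nat (degree q) :: 'a) \<noteq> 0"
        using True dpos by (simp add: of_nat_eq_0_iff_char_dvd)
      ultimately show ?thesis using pd0 lc by simp
    next
      case False
      then have pr: "prime CHAR('a)" using ch by simp
      define P where "P = CHAR('a)"
      have P2: "P \<ge> 2" using pr unfolding P_def by (simp add: prime_ge_2_nat)
      have nd: "coeff q k = 0" if "\<not> P dvd k" for k
      proof -
        have k0: "k > 0" using that by (cases k) auto
        have "coeff (pderiv q) (k - 1) = of_nat k * coeff q k"
          using k0 by (simp add: coeff_pderiv)
        moreover have "(of_nat k :: 'a) \<noteq> 0" using that unfolding P_def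
          by (simp add: of_nat_eq_0_iff_char_dvd)
        ultimately show ?thesis using pd0 by simp
      qed
      define d where "d = degree q"
      define h where "h = (\<Sum>i\<le>d. monom (coeff q (P * i)) i)"
      have ch_h: "coeff h j = coeff q (P * j)" for j
      proof (cases "j \<le> d")
        case True
        then show ?thesis unfolding h_def by (simp add: coeff_sum coeff_monom)
      next
        case False
        have "j \<le> P * j" using P2 by simp
        then have "P * j > d" using False by linarith
        then show ?thesis using False unfolding h_def d_def by (simp add: coeff_sum coeff_monom coeff_eq_0)
      qed
      have polyh: "poly h x = (\<Sum>i\<le>d. coeff q (P * i) * x ^ i)"
        unfolding h_def by (simp add: poly_sum poly_monom)
      have "poly h x ^ P = (\<Sum>i\<le>d. (coeff q (P * i) * x ^ i) ^ P)"
        unfolding polyh P_def by (rule freshmans_dream_sum[OF pr refl])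
      also have "\<dots> = (\<Sum>i\<le>d. coeff q (P * i) * x ^ (P * i))"
        using frob_ps[OF pr] qc unfolding P_def by (simp add: power_mult_distrib power_mult[symmetric] mult.commute)
      also have "\<dots> = (\<Sum>k\<in>(\<lambda>i. P * i) ` {..d}. coeff q k * x ^ k)"
        by (subst sum.reindex) (use P2 in \<open>auto simp: inj_on_def\<close>)
      also have "\<dots> = (\<Sum>k\<le>P * d. coeff q k * x ^ k)"
      proof (rule sum.mono_neutral_left)
        show "(*) P ` {..d} \<subseteq> {..P * d}" by auto
        show "\<forall>i\<in>{..P * d} - (*) P ` {..d}. coeff q i * x ^ i = 0"
        proof
          fix k assume k: "k \<in> {..P * d} - (*) P ` {..d}"
          show "coeff q k * x ^ k = 0"
          proof (cases "P dvd k")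
            case True
            then obtain i where "k = P * i" by blast
            with k have "i > d" by auto
            moreover have "i \<le> P * i" using P2 by simp
            ultimately have "k > d" using \<open>k = P*i\<close> by linarith
            then show ?thesis unfolding d_def by (simp add: coeff_eq_0)
          qed (simp add: nd)
        qed
      qed auto
      also have "\<dots> = poly q x"
      proof -
        have "poly q x = (\<Sum>k\<le>d. coeff q k * x ^ k)" unfolding d_def by (rule poly_altdef)
        also have "\<dots> = (\<Sum>k\<le>P * d. coeff q k * x ^ k)"
        proof (rule sum.mono_neutral_left)
          have "d \<le> P * d" using P2 by simp
          then show "{..d} \<subseteq> {..P * d}" by auto
        qed (auto simp: d_def coeff_eq_0)
        finally show ?thesis by simp
      qed
      finally have "poly h x ^ P = 0" using qx by simp
      then have hx: "poly h x = 0" by simp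
      have Pd: "P dvd d" using lc nd unfolding d_def by blast
      have hd: "coeff h (d div P) \<noteq> 0" using Pd lc by (simp add: ch_h d_def)
      then have h0: "h \<noteq> 0" by auto
      have hS: "h \<in> S" unfolding S_def using h0 hx qc ch_h by simp
      have "degree h \<le> d div P"
      proof (rule degree_le, intro allI impI)
        fix j assume "d div P < j"
        then have "P * (d div P) < P * j" using P2 by simp
        then have "P * j > d" using Pd by simp
        then show "coeff h j = 0" by (simp add: ch_h d_def coeff_eq_0)
      qed
      moreover have "d div P < d" using dpos P2 unfolding d_def by simp
      ultimately have "degree h < degree q" unfolding d_def by simp
      with qmin[OF hS] show ?thesis by simp
    qed
  qed
qed


lemma mul_closed: "n > 0 \<Longrightarrow> dic_mult n x y \<in> dic_carrier n"
  by (auto simp: dic_mult_def dic_carrier_def split: prod.splits)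

definition sg :: "nat \<Rightarrow> int" where "sg e = (if e = 0 then 1 else -1)"

lemma fst_mul_int:
  assumes "n > 0" "snd x < 2" "fst y < 2*n"
  shows "int (fst (dic_mult n x y)) =
    (int (fst x) + sg (snd x) * int (fst y)
       + (if snd x = 1 \<and> snd y = 1 then int n else 0)) mod (2 * int n)"
proof -
  obtain i e j f where x: "x = (i, e)" and y: "y = (j, f)" by (cases x, cases y) auto
  have j: "j < 2*n" using assms y by simp
  have e: "e = 0 \<or> e = 1" using assms x by auto
  have m: "int (2*n - j) = 2 * int n - int j" using j by simp
  have "int (fst (dic_mult n x y)) =
        (int (if e = 0 then i + j else i + (2*n - j)) + (if e = 1 \<and> f = 1 then int n else 0)) mod (2 * int n)"
    by (simp add: x y dic_mult_def of_nat_mod)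
  also have "\<dots> = (int i + sg e * int j
       + (if e = 1 \<and> f = 1 then int n else 0)) mod (2 * int n)"
  proof (cases "e = 0")
    case False
    define c where "c = (if e = 1 \<and> f = 1 then int n else 0)"
    have "(int (i + (2*n - j)) + c) mod (2 * int n)
        = ((int i - int j + c) + 2 * int n) mod (2 * int n)"
      using m by (simp add: algebra_simps)
    also have "\<dots> = (int i - int j + c) mod (2 * int n)"
      by simp
    finally show ?thesis using False by (simp add: sg_def c_def)
  qed (simp add: sg_def)
  finally show ?thesis by (simp add: x y)
qed

lemma snd_mul: "snd (dic_mult n x y) = (snd x + snd y) mod 2"
  by (simp add: dic_mult_def split: prod.splits)

lemma mul_assoc:
  assumes n: "n > 0" and xyz: "x \<in> dic_carrier n" "y \<in> dic_carrier n" "z \<in> dic_carrier n"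
  shows "dic_mult n (dic_mult n x y) z = dic_mult n x (dic_mult n y z)"
proof -
  obtain i e j f k g where x: "x = (i, e)" and y: "y = (j, f)" and z: "z = (k, g)"
    by (cases x, cases y, cases z) auto
  have b: "i < 2*n" "j < 2*n" "k < 2*n" "e < 2" "f < 2" "g < 2" using xyz x y z by (auto simp: dic_carrier_def)
  have c1: "dic_mult n x y \<in> dic_carrier n" "dic_mult n y z \<in> dic_carrier n" using mul_closed n by auto
  have s: "snd (dic_mult n (dic_mult n x y) z) = snd (dic_mult n x (dic_mult n y z))"
    by (simp add: snd_mul x y z) presburger
  define N where "N = 2 * int n"
  define cxy where "cxy = (if e = 1 \<and> f = 1 then int n else 0)"
  define cyz where "cyz = (if f = 1 \<and> g = 1 then int n else 0)"
  define c1' where "c1' = (if (e + f) mod 2 = 1 \<and> g = 1 then int n else 0)"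
  define c2' where "c2' = (if e = 1 \<and> (f + g) mod 2 = 1 then int n else 0)"
  have L: "int (fst (dic_mult n (dic_mult n x y) z)) = (int i + sg e * int j + cxy + sg ((e+f) mod 2) * int k + c1') mod N"
  proof -
    have "int (fst (dic_mult n (dic_mult n x y) z)) = (int (fst (dic_mult n x y)) + sg ((e+f) mod 2) * int k + c1') mod N"
      by (subst fst_mul_int) (use n c1 b x y z in \<open>auto simp: dic_carrier_def snd_mul c1'_def N_def\<close>)
    also have "\<dots> = ((int i + sg e * int j + cxy) mod N + sg ((e+f) mod 2) * int k + c1') mod N"
      by (subst fst_mul_int) (use n c1 b x y z in \<open>auto simp: dic_carrier_def snd_mul cxy_def N_def\<close>)
    also have "\<dots> = (int i + sg e * int j + cxy + sg ((e+f) mod 2) * int k + c1') mod N"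
      by (intro mod_add_cong) (simp_all add: mod_mod_trivial)
    finally show ?thesis .
  qed
  have R: "int (fst (dic_mult n x (dic_mult n y z))) = (int i + sg e * (int j + sg f * int k + cyz) + c2') mod N"
  proof -
    have "int (fst (dic_mult n x (dic_mult n y z))) = (int i + sg e * int (fst (dic_mult n y z)) + c2') mod N"
      by (subst fst_mul_int) (use n c1 b x y z in \<open>auto simp: dic_carrier_def snd_mul c2'_def N_def\<close>)
    also have "\<dots> = (int i + sg e * ((int j + sg f * int k + cyz) mod N) + c2') mod N"
      by (subst fst_mul_int) (use n c1 b x y z in \<open>auto simp: dic_carrier_def snd_mul cyz_def N_def\<close>)
    also have "\<dots> = (int i + sg e * (int j + sg f * int k + cyz) + c2') mod N"
      by (intro mod_add_cong) (simp_all add: mod_mult_right_eq)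
    finally show ?thesis .
  qed
  have "(int i + sg e * int j + cxy + sg ((e+f) mod 2) * int k + c1') mod N
      = (int i + sg e * (int j + sg f * int k + cyz) + c2') mod N"
    unfolding mod_eq_dvd_iff
    using b by (cases "e = 0"; cases "f = 0"; cases "g = 0")
      (auto simp: sg_def cxy_def cyz_def c1'_def c2'_def N_def algebra_simps less_2_cases_iff)
  then have "int (fst (dic_mult n (dic_mult n x y) z)) = int (fst (dic_mult n x (dic_mult n y z)))"
    using L R by simp
  then show ?thesis using s by (simp add: prod_eq_iff)
qed

lemma finG: "finite (dic_carrier n)" by (simp add: dic_carrier_def)

definition one_d :: "nat \<times> nat" where "one_d = (0, 0)"
definition inv_d :: "nat \<Rightarrow> nat \<times> nat \<Rightarrow> nat \<times> nat" where
  "inv_d n x = (if snd x = 0 then ((2*n - fst x) mod (2*n), 0) else ((fst x + n) mod (2*n), 1))"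

lemma one_in: "n > 0 \<Longrightarrow> one_d \<in> dic_carrier n" by (simp add: one_d_def dic_carrier_def)

lemma mul_one_left: "x \<in> dic_carrier n \<Longrightarrow> dic_mult n one_d x = x"
  by (auto simp: one_d_def dic_mult_def dic_carrier_def)

lemma mul_one_right: "x \<in> dic_carrier n \<Longrightarrow> dic_mult n x one_d = x"
  by (auto simp: one_d_def dic_mult_def dic_carrier_def)

lemma inv_in: "n > 0 \<Longrightarrow> inv_d n x \<in> dic_carrier n"
  by (simp add: inv_d_def dic_carrier_def)

lemma mul_inv_left: assumes "n > 0" "x \<in> dic_carrier n" shows "dic_mult n (inv_d n x) x = one_d"
proof -
  obtain i e where x: "x = (i, e)" by (cases x)
  have b: "i < 2*n" "e < 2" using assms x by (auto simp: dic_carrier_def)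
  show ?thesis
  proof (cases "e = 0")
    case True
    show ?thesis
    proof (cases "i = 0")
      case True then show ?thesis using \<open>e = 0\<close> x by (simp add: inv_d_def dic_mult_def one_d_def)
    next
      case False
      then have "(2*n - i) mod (2*n) = 2*n - i" using b by simp
      then show ?thesis using \<open>e = 0\<close> x b by (simp add: inv_d_def dic_mult_def one_d_def)
    qed
  next
    case False
    then have e: "e = 1" using b by simp
    have "((i + n) mod (2 * n) + (2 * n - i) + n) mod (2 * n) = 0"
    proof (cases "i < n")
      case True
      then have "(i + n) mod (2*n) = i + n" by simp
      then show ?thesis using b by simp
    next
      case False
      then have "(i + n) mod (2*n) = i - n" using b by (simp add: mod_if)
      then show ?thesis using b False by (simp add: mod_if)
    qed
    then show ?thesis using e x by (simp add: inv_d_def dic_mult_def one_d_def)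
  qed
qed

lemma mul_inv_right: assumes "n > 0" "x \<in> dic_carrier n" shows "dic_mult n x (inv_d n x) = one_d"
proof -
  have "dic_mult n (inv_d n (inv_d n x)) (inv_d n x) = one_d" using mul_inv_left assms inv_in by blast
  have c: "dic_mult n x (inv_d n x) = dic_mult n (dic_mult n (dic_mult n (inv_d n (inv_d n x)) (inv_d n x)) x) (inv_d n x)"
    using mul_inv_left[OF assms(1) inv_in[OF assms(1), of x]] mul_one_left[OF assms(2)] by simp
  also have "\<dots> = dic_mult n (inv_d n (inv_d n x)) (dic_mult n (dic_mult n (inv_d n x) x) (inv_d n x))"
    using assms by (simp add: mul_assoc inv_in mul_closed)
  also have "\<dots> = one_d"
    using assms by (simp add: mul_inv_left mul_one_left inv_in)
  finally show ?thesis .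
qed

lemma inv_unique: assumes "n > 0" "x \<in> dic_carrier n" "y \<in> dic_carrier n" "dic_mult n y x = one_d"
  shows "y = inv_d n x"
proof -
  have "y = dic_mult n y (dic_mult n x (inv_d n x))" using assms mul_inv_right mul_one_right by simp
  also have "\<dots> = dic_mult n (dic_mult n y x) (inv_d n x)" by (rule mul_assoc[symmetric, OF assms(1) assms(3) assms(2) inv_in[OF assms(1)]])
  also have "\<dots> = inv_d n x" using assms by (simp add: mul_one_left inv_in)
  finally show ?thesis .
qed

definition a_d :: "nat \<times> nat" where "a_d = (1, 0)"
definition ai_d :: "nat \<Rightarrow> nat \<times> nat" where "ai_d n = (2*n - 1, 0)"

lemma a_in: "n \<ge> 1 \<Longrightarrow> a_d \<in> dic_carrier n" by (simp add: a_d_def dic_carrier_def)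
lemma ai_in: "n \<ge> 1 \<Longrightarrow> ai_d n \<in> dic_carrier n" by (simp add: ai_d_def dic_carrier_def)

lemma mul_a_comm: "n \<ge> 1 \<Longrightarrow> x \<in> dic_carrier n \<Longrightarrow>
  dic_mult n x a_d = (if snd x = 0 then dic_mult n a_d x else dic_mult n (ai_d n) x)"
  by (auto simp: dic_mult_def a_d_def ai_d_def dic_carrier_def add.commute)

lemma mul_ai_comm: "n \<ge> 1 \<Longrightarrow> x \<in> dic_carrier n \<Longrightarrow>
  dic_mult n x (ai_d n) = (if snd x = 0 then dic_mult n (ai_d n) x else dic_mult n a_d x)"
  by (auto simp: dic_mult_def a_d_def ai_d_def dic_carrier_def add.commute)


definition eb :: "nat \<times> nat \<Rightarrow> nat \<times> nat \<Rightarrow> 'a::field" where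
  "eb g = (\<lambda>z. if z = g then 1 else 0)"
definition sc :: "'a::field \<Rightarrow> (nat \<times> nat \<Rightarrow> 'a) \<Rightarrow> nat \<times> nat \<Rightarrow> 'a" where
  "sc c f = (\<lambda>z. c * f z)"

lemma eb_apply: "eb g z = (if z = g then 1 else 0)" by (simp add: eb_def)

lemma sum_fun_apply: "(sum F I) z = (\<Sum>i\<in>I. F i z)"
  by (induction I rule: infinite_finite_induct) auto

lemma gm_alt: "ga_mult n f g z = (\<Sum>x\<in>dic_carrier n. \<Sum>y\<in>dic_carrier n. f x * g y * eb (dic_mult n x y) z)"
  unfolding ga_mult_def eb_def by (intro sum.cong refl) (simp split: if_split)

lemma gm_out: "n > 0 \<Longrightarrow> z \<notin> dic_carrier n \<Longrightarrow> ga_mult n f g z = 0"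
  unfolding ga_mult_def using mul_closed[of n] by (intro sum.neutral ballI) auto

lemma gm_carrier: "n > 0 \<Longrightarrow> ga_mult n f g \<in> ga_carrier n"
  unfolding ga_carrier_def using gm_out by blast

lemma gm_add_l: "ga_mult n (f + g) h = ga_mult n f h + ga_mult n g h"
  by (rule ext) (simp add: gm_alt distrib_right sum.distrib)

lemma gm_add_r: "ga_mult n h (f + g) = ga_mult n h f + ga_mult n h g"
  by (rule ext) (simp add: gm_alt distrib_left distrib_right sum.distrib)

lemma gm_diff_l: "ga_mult n (f - g) h = ga_mult n f h - ga_mult n g h"
  by (rule ext) (simp add: gm_alt left_diff_distrib sum_subtractf)

lemma gm_diff_r: "ga_mult n h (f - g) = ga_mult n h f - ga_mult n h g"
  by (rule ext) (simp add: gm_alt right_diff_distrib left_diff_distrib sum_subtractf)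

lemma gm_sc_l: "ga_mult n (sc c f) h = sc c (ga_mult n f h)"
  by (rule ext) (simp add: gm_alt sc_def sum_distrib_left mult.assoc)

lemma gm_sc_r: "ga_mult n h (sc c f) = sc c (ga_mult n h f)"
  by (rule ext) (simp add: gm_alt sc_def sum_distrib_left mult_ac)

lemma gm_zero_l: "ga_mult n 0 h = 0"
  by (rule ext) (simp add: gm_alt)

lemma gm_zero_r: "ga_mult n h 0 = 0"
  by (rule ext) (simp add: gm_alt)

lemma gm_sum_l: "ga_mult n (\<Sum>i\<in>I. F i) h = (\<Sum>i\<in>I. ga_mult n (F i) h)"
  by (induction I rule: infinite_finite_induct) (simp_all only: sum.infinite sum.empty sum.insert gm_zero_l gm_add_l not_False_eq_True)

lemma gm_sum_r: "ga_mult n h (\<Sum>i\<in>I. F i) = (\<Sum>i\<in>I. ga_mult n h (F i))"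
  by (induction I rule: infinite_finite_induct) (simp_all only: sum.infinite sum.empty sum.insert gm_zero_r gm_add_r not_False_eq_True)

lemma sc_sum: "sc c (\<Sum>i\<in>I. F i) = (\<Sum>i\<in>I. sc c (F i))"
  by (rule ext) (simp add: sc_def sum_fun_apply sum_distrib_left)

lemma sc_sc: "sc c (sc d f) = sc (c * d) f"
  by (rule ext) (simp add: sc_def)

lemma gm_eb_r: "n > 0 \<Longrightarrow> y \<in> dic_carrier n \<Longrightarrow>
  ga_mult n f (eb y) z = (\<Sum>u\<in>dic_carrier n. if dic_mult n u y = z then f u else 0)"
proof -
  assume n: "n > 0" and y: "y \<in> dic_carrier n"
  have "ga_mult n f (eb y) z = (\<Sum>u\<in>dic_carrier n. \<Sum>v\<in>dic_carrier n.
      if v = y then (if dic_mult n u y = z then f u else 0) else 0)"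
    unfolding ga_mult_def eb_def by (intro sum.cong refl) (simp split: if_split)
  also have "\<dots> = (\<Sum>u\<in>dic_carrier n. if dic_mult n u y = z then f u else 0)"
    using y finG by simp
  finally show ?thesis .
qed

lemma gm_eb_l: "n > 0 \<Longrightarrow> x \<in> dic_carrier n \<Longrightarrow>
  ga_mult n (eb x) g z = (\<Sum>v\<in>dic_carrier n. if dic_mult n x v = z then g v else 0)"
proof -
  assume n: "n > 0" and x: "x \<in> dic_carrier n"
  have "ga_mult n (eb x) g z = (\<Sum>u\<in>dic_carrier n. if u = x then (\<Sum>v\<in>dic_carrier n. if dic_mult n x v = z then g v else 0) else 0)"
    unfolding ga_mult_def
  proof (intro sum.cong refl)
    fix u show "(\<Sum>v\<in>dic_carrier n. if dic_mult n u v = z then eb x u * g v else 0) =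
      (if u = x then (\<Sum>v\<in>dic_carrier n. if dic_mult n x v = z then g v else 0) else 0)"
      by (cases "u = x") (simp_all add: eb_apply cong: if_cong)
  qed
  also have "\<dots> = (\<Sum>v\<in>dic_carrier n. if dic_mult n x v = z then g v else 0)"
    using x finG by simp
  finally show ?thesis .
qed

lemma gm_eb_eb_pt: "n > 0 \<Longrightarrow> x \<in> dic_carrier n \<Longrightarrow> y \<in> dic_carrier n \<Longrightarrow>
  ga_mult n (eb x) (eb y) z = (eb (dic_mult n x y) z :: 'a::field)"
proof -
  assume n: "n > 0" and x: "x \<in> dic_carrier n" and y: "y \<in> dic_carrier n"
  have "ga_mult n (eb x) (eb y) z = (\<Sum>u\<in>dic_carrier n. if dic_mult n u y = z then (eb x u :: 'a) else 0)"
    by (rule gm_eb_r[OF n y])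
  also have "\<dots> = (\<Sum>u\<in>dic_carrier n. if u = x then (if dic_mult n x y = z then 1 else 0) else 0)"
    by (intro sum.cong refl) (auto simp: eb_def)
  also have "\<dots> = eb (dic_mult n x y) z" using x finG by (simp add: eb_def)
  finally show ?thesis .
qed

lemma gm_eb_eb: "n > 0 \<Longrightarrow> x \<in> dic_carrier n \<Longrightarrow> y \<in> dic_carrier n \<Longrightarrow>
  ga_mult n (eb x) (eb y) = (eb (dic_mult n x y) :: _ \<Rightarrow> 'a::field)"
  using gm_eb_eb_pt by (intro ext) blast

lemma decomp: "\<alpha> \<in> ga_carrier n \<Longrightarrow> \<alpha> = (\<Sum>g\<in>dic_carrier n. sc (\<alpha> g) (eb g))"
proof (rule ext)
  fix z assume a: "\<alpha> \<in> ga_carrier n"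
  have "(\<Sum>g\<in>dic_carrier n. sc (\<alpha> g) (eb g)) z = (\<Sum>g\<in>dic_carrier n. if g = z then \<alpha> g else 0)"
    by (intro trans[OF sum_fun_apply] sum.cong refl) (auto simp: sc_def eb_def)
  also have "\<dots> = \<alpha> z"
  proof (cases "z \<in> dic_carrier n")
    case True then show ?thesis using finG by simp
  next
    case False
    have "(\<Sum>g\<in>dic_carrier n. if g = z then \<alpha> g else 0) = 0" using False by (intro sum.neutral) auto
    moreover have "\<alpha> z = 0" using a False unfolding ga_carrier_def by blast
    ultimately show ?thesis by simp
  qed
  finally show "\<alpha> z = (\<Sum>g\<in>dic_carrier n. sc (\<alpha> g) (eb g)) z" by simp
qed

lemma gm_decomp: "n > 0 \<Longrightarrow> \<alpha> \<in> ga_carrier n \<Longrightarrow> \<beta> \<in> ga_carrier n \<Longrightarrow>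
  ga_mult n \<alpha> \<beta> = (\<Sum>x\<in>dic_carrier n. \<Sum>y\<in>dic_carrier n. sc (\<alpha> x * \<beta> y) (eb (dic_mult n x y)))"
proof -
  assume n: "n > 0" and a: "\<alpha> \<in> ga_carrier n" and b: "\<beta> \<in> ga_carrier n"
  have "ga_mult n \<alpha> \<beta> = ga_mult n (\<Sum>x\<in>dic_carrier n. sc (\<alpha> x) (eb x)) (\<Sum>y\<in>dic_carrier n. sc (\<beta> y) (eb y))"
    using decomp[OF a] decomp[OF b] by simp
  also have "\<dots> = (\<Sum>x\<in>dic_carrier n. ga_mult n (sc (\<alpha> x) (eb x)) (\<Sum>y\<in>dic_carrier n. sc (\<beta> y) (eb y)))"
    by (rule gm_sum_l)
  also have "\<dots> = (\<Sum>x\<in>dic_carrier n. \<Sum>y\<in>dic_carrier n. ga_mult n (sc (\<alpha> x) (eb x)) (sc (\<beta> y) (eb y)))"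
    by (simp only: gm_sum_r)
  also have "\<dots> = (\<Sum>x\<in>dic_carrier n. \<Sum>y\<in>dic_carrier n. sc (\<alpha> x * \<beta> y) (eb (dic_mult n x y)))"
    using n by (intro sum.cong refl) (simp add: gm_sc_l gm_sc_r sc_sc gm_eb_eb mult.commute)
  finally show ?thesis .
qed

lemma ga_add_eq: "ga_add f g = f + g" by (simp add: ga_add_def plus_fun_def)
lemma ga_sub_eq: "ga_sub f g = f - g" by (simp add: ga_sub_def fun_diff_def)

lemma carrier_add: "f \<in> ga_carrier n \<Longrightarrow> g \<in> ga_carrier n \<Longrightarrow> f + g \<in> ga_carrier n"
  by (simp add: ga_carrier_def)
lemma carrier_diff: "f \<in> ga_carrier n \<Longrightarrow> g \<in> ga_carrier n \<Longrightarrow> f - g \<in> ga_carrier n"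
  by (simp add: ga_carrier_def)
lemma carrier_sc: "f \<in> ga_carrier n \<Longrightarrow> sc c f \<in> ga_carrier n"
  by (simp add: ga_carrier_def sc_def)
lemma carrier_eb: "g \<in> dic_carrier n \<Longrightarrow> eb g \<in> ga_carrier n"
  by (auto simp: ga_carrier_def eb_def)
lemma carrier_zero: "0 \<in> ga_carrier n"
  by (simp add: ga_carrier_def)
lemma carrier_sum: "(\<And>i. i \<in> I \<Longrightarrow> F i \<in> ga_carrier n) \<Longrightarrow> (\<Sum>i\<in>I. F i) \<in> ga_carrier n"
  by (induction I rule: infinite_finite_induct) (auto simp: carrier_zero carrier_add)

lemma gm_eb_sc: "n > 0 \<Longrightarrow> x \<in> dic_carrier n \<Longrightarrow> y \<in> dic_carrier n \<Longrightarrow>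
  ga_mult n (sc a (eb x)) (sc b (eb y)) = sc (a * b) (eb (dic_mult n x y))"
  by (simp add: gm_sc_l gm_sc_r sc_sc gm_eb_eb mult.commute)

lemma gm_assoc:
  assumes n: "n > 0" and c: "\<alpha> \<in> ga_carrier n" "\<beta> \<in> ga_carrier n" "\<gamma> \<in> ga_carrier n"
  shows "ga_mult n (ga_mult n \<alpha> \<beta>) \<gamma> = ga_mult n \<alpha> (ga_mult n \<beta> \<gamma>)"
proof -
  let ?G = "dic_carrier n"
  have "ga_mult n (ga_mult n \<alpha> \<beta>) \<gamma> =
    ga_mult n (\<Sum>x\<in>?G. \<Sum>y\<in>?G. sc (\<alpha> x * \<beta> y) (eb (dic_mult n x y))) (\<Sum>w\<in>?G. sc (\<gamma> w) (eb w))"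
    using gm_decomp[OF n c(1) c(2)] decomp[OF c(3)] by simp
  also have "\<dots> = (\<Sum>x\<in>?G. \<Sum>y\<in>?G. ga_mult n (sc (\<alpha> x * \<beta> y) (eb (dic_mult n x y))) (\<Sum>w\<in>?G. sc (\<gamma> w) (eb w)))"
    by (simp only: gm_sum_l)
  also have "\<dots> = (\<Sum>x\<in>?G. \<Sum>y\<in>?G. \<Sum>w\<in>?G. ga_mult n (sc (\<alpha> x * \<beta> y) (eb (dic_mult n x y))) (sc (\<gamma> w) (eb w)))"
    by (simp only: gm_sum_r)
  also have "\<dots> = (\<Sum>x\<in>?G. \<Sum>y\<in>?G. \<Sum>w\<in>?G. sc (\<alpha> x * \<beta> y * \<gamma> w) (eb (dic_mult n (dic_mult n x y) w)))"
    using n by (intro sum.cong refl) (simp add: gm_eb_sc mul_closed)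
  also have "\<dots> = (\<Sum>x\<in>?G. \<Sum>y\<in>?G. \<Sum>w\<in>?G. sc (\<alpha> x * (\<beta> y * \<gamma> w)) (eb (dic_mult n x (dic_mult n y w))))"
    using n by (intro sum.cong refl) (simp add: mul_assoc mult.assoc)
  also have "\<dots> = (\<Sum>x\<in>?G. \<Sum>y\<in>?G. \<Sum>w\<in>?G. ga_mult n (sc (\<alpha> x) (eb x)) (sc (\<beta> y * \<gamma> w) (eb (dic_mult n y w))))"
    using n by (intro sum.cong refl) (simp add: gm_eb_sc mul_closed)
  also have "\<dots> = (\<Sum>x\<in>?G. ga_mult n (sc (\<alpha> x) (eb x)) (\<Sum>y\<in>?G. \<Sum>w\<in>?G. sc (\<beta> y * \<gamma> w) (eb (dic_mult n y w))))"
    by (simp only: gm_sum_r)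
  also have "\<dots> = ga_mult n (\<Sum>x\<in>?G. sc (\<alpha> x) (eb x)) (\<Sum>y\<in>?G. \<Sum>w\<in>?G. sc (\<beta> y * \<gamma> w) (eb (dic_mult n y w)))"
    by (simp only: gm_sum_l)
  also have "\<dots> = ga_mult n \<alpha> (ga_mult n \<beta> \<gamma>)"
    using gm_decomp[OF n c(2) c(3)] decomp[OF c(1)] by simp
  finally show ?thesis .
qed

definition lin_ext :: "nat \<Rightarrow> (nat \<times> nat \<Rightarrow> nat \<times> nat \<Rightarrow> 'a::field) \<Rightarrow> (nat \<times> nat \<Rightarrow> 'a) \<Rightarrow> nat \<times> nat \<Rightarrow> 'a" where
  "lin_ext n B f = (\<Sum>g\<in>dic_carrier n. sc (f g) (B g))"

lemma sc_add_scalar: "sc (a + b) f = sc a f + sc b f"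
  by (rule ext) (simp add: sc_def distrib_right)
lemma sc_add: "sc c (f + g) = sc c f + sc c g"
  by (rule ext) (simp add: sc_def distrib_left)
lemma sc_diff: "sc c (f - g) = sc c f - sc c g"
  by (rule ext) (simp add: sc_def right_diff_distrib)
lemma sc_zero_scalar: "sc 0 f = 0"
  by (rule ext) (simp add: sc_def)
lemma sc_sum_scalar: "sc (\<Sum>i\<in>I. a i) f = (\<Sum>i\<in>I. sc (a i) f)"
  by (induction I rule: infinite_finite_induct) (simp_all add: sc_zero_scalar sc_add_scalar)

lemma lin_ext_add: "lin_ext n B (f + g) = lin_ext n B f + lin_ext n B g"
  by (simp add: lin_ext_def sc_add_scalar sum.distrib)
lemma lin_ext_sc: "lin_ext n B (sc c f) = sc c (lin_ext n B f)"
  by (simp add: lin_ext_def sc_sum sc_sc) (simp add: sc_def)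
lemma lin_ext_sum: "lin_ext n B (\<Sum>i\<in>I. F i) = (\<Sum>i\<in>I. lin_ext n B (F i))"
proof (induction I rule: infinite_finite_induct)
  case (insert x F)
  then show ?case by (simp only: sum.insert lin_ext_add not_False_eq_True)
qed (simp_all add: lin_ext_def sc_zero_scalar)
lemma lin_ext_eb: "v \<in> dic_carrier n \<Longrightarrow> lin_ext n B (eb v) = B v"
proof -
  assume v: "v \<in> dic_carrier n"
  have "lin_ext n B (eb v) = (\<Sum>g\<in>dic_carrier n. if g = v then B v else 0)"
    unfolding lin_ext_def by (intro sum.cong refl) (auto simp: eb_apply sc_def zero_fun_def)
  also have "\<dots> = B v" using v finG by simp
  finally show ?thesis .
qed

lemma lin_ext_leibniz:
  assumes n: "n > 0" and a: "\<alpha> \<in> ga_carrier n" and b: "\<beta> \<in> ga_carrier n"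
    and B: "\<And>x y. x \<in> dic_carrier n \<Longrightarrow> y \<in> dic_carrier n \<Longrightarrow>
      B (dic_mult n x y) = ga_mult n (B x) (eb y) + ga_mult n (eb x) (B y)"
  shows "lin_ext n B (ga_mult n \<alpha> \<beta>) = ga_mult n (lin_ext n B \<alpha>) \<beta> + ga_mult n \<alpha> (lin_ext n B \<beta>)"
proof -
  let ?G = "dic_carrier n"
  have "lin_ext n B (ga_mult n \<alpha> \<beta>) = (\<Sum>x\<in>?G. \<Sum>y\<in>?G. sc (\<alpha> x * \<beta> y) (B (dic_mult n x y)))"
    using n by (simp add: gm_decomp[OF n a b] lin_ext_sum lin_ext_sc lin_ext_eb mul_closed)
  also have "\<dots> = (\<Sum>x\<in>?G. \<Sum>y\<in>?G. sc (\<alpha> x * \<beta> y) (ga_mult n (B x) (eb y)))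
     + (\<Sum>x\<in>?G. \<Sum>y\<in>?G. sc (\<alpha> x * \<beta> y) (ga_mult n (eb x) (B y)))"
    by (simp add: B sc_add sum.distrib)
  also have "(\<Sum>x\<in>?G. \<Sum>y\<in>?G. sc (\<alpha> x * \<beta> y) (ga_mult n (B x) (eb y))) = ga_mult n (lin_ext n B \<alpha>) \<beta>"
  proof -
    have "ga_mult n (lin_ext n B \<alpha>) \<beta> = ga_mult n (\<Sum>x\<in>?G. sc (\<alpha> x) (B x)) (\<Sum>y\<in>?G. sc (\<beta> y) (eb y))"
      using decomp[OF b] by (simp add: lin_ext_def)
    also have "\<dots> = (\<Sum>x\<in>?G. ga_mult n (sc (\<alpha> x) (B x)) (\<Sum>y\<in>?G. sc (\<beta> y) (eb y)))"
      by (simp only: gm_sum_l)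
    also have "\<dots> = (\<Sum>x\<in>?G. \<Sum>y\<in>?G. ga_mult n (sc (\<alpha> x) (B x)) (sc (\<beta> y) (eb y)))"
      by (simp only: gm_sum_r)
    finally show ?thesis by (simp add: gm_sc_l gm_sc_r sc_sc mult.commute)
  qed
  also have "(\<Sum>x\<in>?G. \<Sum>y\<in>?G. sc (\<alpha> x * \<beta> y) (ga_mult n (eb x) (B y))) = ga_mult n \<alpha> (lin_ext n B \<beta>)"
  proof -
    have "ga_mult n \<alpha> (lin_ext n B \<beta>) = ga_mult n (\<Sum>x\<in>?G. sc (\<alpha> x) (eb x)) (\<Sum>y\<in>?G. sc (\<beta> y) (B y))"
      using decomp[OF a] by (simp add: lin_ext_def)
    also have "\<dots> = (\<Sum>x\<in>?G. ga_mult n (sc (\<alpha> x) (eb x)) (\<Sum>y\<in>?G. sc (\<beta> y) (B y)))"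
      by (simp only: gm_sum_l)
    also have "\<dots> = (\<Sum>x\<in>?G. \<Sum>y\<in>?G. ga_mult n (sc (\<alpha> x) (eb x)) (sc (\<beta> y) (B y)))"
      by (simp only: gm_sum_r)
    finally show ?thesis by (simp add: gm_sc_l gm_sc_r sc_sc mult.commute)
  qed
  finally show ?thesis .
qed

lemma inner_in_Der:
  fixes \<beta> :: "nat \<times> nat \<Rightarrow> 'a::field"
  assumes n: "n > 0" and b: "\<beta> \<in> ga_carrier n"
  shows "(restrict (\<lambda>\<alpha>. ga_sub (ga_mult n \<alpha> \<beta>) (ga_mult n \<beta> \<alpha>)) (ga_carrier n) :: _ \<Rightarrow> _ \<Rightarrow> 'a::field) \<in> Der n"
  unfolding Der_def
proof (intro CollectI conjI ballI)
  let ?d = "restrict (\<lambda>\<alpha>. ga_sub (ga_mult n \<alpha> \<beta>) (ga_mult n \<beta> \<alpha>)) (ga_carrier n) :: _ \<Rightarrow> _ \<Rightarrow> 'a"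
  show "?d \<in> extensional (ga_carrier n)" by simp
  fix x :: "nat \<times> nat \<Rightarrow> 'a" assume x: "x \<in> ga_carrier n"
  show "?d x \<in> ga_carrier n" using x n by (simp add: ga_sub_eq carrier_diff gm_carrier)
next
  let ?d = "restrict (\<lambda>\<alpha>. ga_sub (ga_mult n \<alpha> \<beta>) (ga_mult n \<beta> \<alpha>)) (ga_carrier n) :: _ \<Rightarrow> _ \<Rightarrow> 'a"
  fix x y :: "nat \<times> nat \<Rightarrow> 'a" assume x: "x \<in> ga_carrier n" and y: "y \<in> ga_carrier n"
  show "?d (ga_add x y) = ga_add (?d x) (?d y)"
    using x y by (simp add: ga_add_eq ga_sub_eq carrier_add gm_add_l gm_add_r)
  have xy: "ga_mult n x y \<in> ga_carrier n" using n by (rule gm_carrier)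
  have A1: "ga_mult n (ga_mult n x \<beta>) y = ga_mult n x (ga_mult n \<beta> y)" by (rule gm_assoc[OF n x b y])
  have A2: "ga_mult n (ga_mult n \<beta> x) y = ga_mult n \<beta> (ga_mult n x y)" by (rule gm_assoc[OF n b x y])
  have A3: "ga_mult n (ga_mult n x y) \<beta> = ga_mult n x (ga_mult n y \<beta>)" by (rule gm_assoc[OF n x y b])
  show "?d (ga_mult n x y) = ga_add (ga_mult n (?d x) y) (ga_mult n x (?d y))"
    using x y xy by (simp add: ga_add_eq ga_sub_eq gm_diff_l gm_diff_r A1 A2 A3)
qed

definition Dz :: "nat \<Rightarrow> nat \<times> nat \<Rightarrow> nat \<times> nat \<Rightarrow> 'a::field" where
  "Dz n g = sc (of_nat (fst g)) (eb (dic_mult n a_d g) - eb (dic_mult n (ai_d n) g))"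

lemma of_nat_fst_mul:
  assumes n: "n > 0" and c0: "of_nat n = (0::'a::field)"
    and x: "x \<in> dic_carrier n" and y: "y \<in> dic_carrier n"
  shows "(of_nat (fst (dic_mult n x y)) :: 'a) =
    of_nat (fst x) + (if snd x = 0 then of_nat (fst y) else - of_nat (fst y))"
proof -
  define A where "A = int (fst x) + sg (snd x) * int (fst y) + (if snd x = 1 \<and> snd y = 1 then int n else 0)"
  have e: "int (fst (dic_mult n x y)) = A mod (2 * int n)"
    unfolding A_def by (rule fst_mul_int) (use n x y in \<open>auto simp: dic_carrier_def\<close>)
  have N0: "(of_int (2 * int n) :: 'a) = 0" using c0 by simp
  have "(of_nat (fst (dic_mult n x y)) :: 'a) = of_int (int (fst (dic_mult n x y)))" by simp
  also have "\<dots> = of_int (A - 2 * int n * (A div (2 * int n)))" unfolding e by (metis minus_div_mult_eq_mod mult.commute)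
  also have "\<dots> = of_int A" using N0 by simp
  also have "\<dots> = of_nat (fst x) + (if snd x = 0 then of_nat (fst y) else - of_nat (fst y))"
    unfolding A_def using c0 by (simp add: sg_def)
  finally show ?thesis .
qed

lemma Dz_leibniz:
  assumes n: "n \<ge> 1" and c0: "of_nat n = (0::'a::field)"
    and x: "x \<in> dic_carrier n" and y: "y \<in> dic_carrier n"
  shows "(Dz n (dic_mult n x y) :: _ \<Rightarrow> 'a) = ga_mult n (Dz n x) (eb y) + ga_mult n (eb x) (Dz n y)"
proof -
  have n0: "n > 0" using n by simp
  have aG: "a_d \<in> dic_carrier n" "ai_d n \<in> dic_carrier n" using n by (simp_all add: a_in ai_in)
  have cl: "\<And>u v. dic_mult n u v \<in> dic_carrier n" using n0 by (rule mul_closed)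
  have L: "ga_mult n (Dz n x) (eb y) = (sc (of_nat (fst x)) (eb (dic_mult n a_d (dic_mult n x y)) - eb (dic_mult n (ai_d n) (dic_mult n x y))) :: _ \<Rightarrow> 'a)"
    unfolding Dz_def using n0 x y aG cl by (simp add: gm_sc_l gm_diff_l gm_eb_eb mul_assoc)
  have R0: "ga_mult n (eb x) (Dz n y) = (sc (of_nat (fst y)) (eb (dic_mult n (dic_mult n x a_d) y) - eb (dic_mult n (dic_mult n x (ai_d n)) y)) :: _ \<Rightarrow> 'a)"
    unfolding Dz_def using n0 x y aG cl by (simp add: gm_sc_r gm_diff_r gm_eb_eb mul_assoc)
  have R: "ga_mult n (eb x) (Dz n y) = (sc (if snd x = 0 then of_nat (fst y) else - of_nat (fst y))
     (eb (dic_mult n a_d (dic_mult n x y)) - eb (dic_mult n (ai_d n) (dic_mult n x y))) :: _ \<Rightarrow> 'a)"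
  proof (cases "snd x = 0")
    case True
    then show ?thesis unfolding R0 using n x y aG by (simp add: mul_a_comm mul_ai_comm mul_assoc)
  next
    case False
    have "ga_mult n (eb x) (Dz n y) = (sc (of_nat (fst y)) (eb (dic_mult n (ai_d n) (dic_mult n x y)) - eb (dic_mult n a_d (dic_mult n x y))) :: _ \<Rightarrow> 'a)"
      unfolding R0 using n x y aG False by (simp add: mul_a_comm mul_ai_comm mul_assoc)
    then show ?thesis using False by (simp add: sc_def fun_eq_iff algebra_simps)
  qed
  show ?thesis unfolding L R using of_nat_fst_mul[OF n0 c0 x y]
    by (simp add: Dz_def sc_def fun_eq_iff algebra_simps)
qed

lemma Dz_carrier: "n \<ge> 1 \<Longrightarrow> Dz n g \<in> ga_carrier n"
  unfolding Dz_def using mul_closed[of n]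
  by (intro carrier_sc carrier_diff carrier_eb) auto

lemma lin_ext_carrier: "(\<And>g. B g \<in> ga_carrier n) \<Longrightarrow> lin_ext n B f \<in> ga_carrier n"
  unfolding lin_ext_def by (intro carrier_sum carrier_sc) auto

lemma outer_in_Der:
  assumes n: "n \<ge> 1" and c0: "of_nat n = (0::'a::field)"
  shows "(restrict (lin_ext n (Dz n)) (ga_carrier n) :: (_ \<Rightarrow> 'a) \<Rightarrow> _) \<in> Der n"
  unfolding Der_def
proof (intro CollectI conjI ballI)
  show "(restrict (lin_ext n (Dz n)) (ga_carrier n) :: (_ \<Rightarrow> 'a) \<Rightarrow> _) \<in> extensional (ga_carrier n)" by simp
  fix x :: "nat \<times> nat \<Rightarrow> 'a" assume x: "x \<in> ga_carrier n"
  show "restrict (lin_ext n (Dz n)) (ga_carrier n) x \<in> ga_carrier n"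
    using x n by (simp add: lin_ext_carrier Dz_carrier)
next
  fix x y :: "nat \<times> nat \<Rightarrow> 'a" assume x: "x \<in> ga_carrier n" and y: "y \<in> ga_carrier n"
  have n0: "n > 0" using n by simp
  show "restrict (lin_ext n (Dz n)) (ga_carrier n) (ga_add x y) =
    ga_add (restrict (lin_ext n (Dz n)) (ga_carrier n) x) (restrict (lin_ext n (Dz n)) (ga_carrier n) y)"
    using x y by (simp add: ga_add_eq carrier_add lin_ext_add)
  have xy: "ga_mult n x y \<in> ga_carrier n" using n0 by (rule gm_carrier)
  show "restrict (lin_ext n (Dz n)) (ga_carrier n) (ga_mult n x y) =
    ga_add (ga_mult n (restrict (lin_ext n (Dz n)) (ga_carrier n) x) y) (ga_mult n x (restrict (lin_ext n (Dz n)) (ga_carrier n) y))"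
    using x y xy lin_ext_leibniz[OF n0 x y, of "Dz n"] Dz_leibniz[OF n c0] by (simp add: ga_add_eq)
qed

lemma sq_left: "n \<ge> 2 \<Longrightarrow> v \<in> dic_carrier n \<Longrightarrow> (dic_mult n a_d v = (2, 0)) = (v = a_d)"
proof -
  assume n: "n \<ge> 2" and v: "v \<in> dic_carrier n"
  obtain j f where vv: "v = (j, f)" by (cases v)
  have b: "j < 2*n" "f < 2" using v vv by (auto simp: dic_carrier_def)
  have "((1 + j) mod (2*n) = 2) = (j = 1)"
  proof (cases "1 + j = 2*n")
    case True then show ?thesis using n by auto
  next
    case False then have "(1 + j) mod (2*n) = 1 + j" using b by simp
    then show ?thesis by simp
  qed
  then show ?thesis using b by (simp add: vv a_d_def dic_mult_def)
qed

lemma sq_right: "n \<ge> 2 \<Longrightarrow> v \<in> dic_carrier n \<Longrightarrow> (dic_mult n v a_d = (2, 0)) = (v = a_d)"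
proof -
  assume n: "n \<ge> 2" and v: "v \<in> dic_carrier n"
  have "dic_mult n v a_d = (if snd v = 0 then dic_mult n a_d v else dic_mult n (ai_d n) v)"
    using n v by (simp add: mul_a_comm)
  moreover have "snd (dic_mult n (ai_d n) v) = snd v" using v by (auto simp: dic_mult_def ai_d_def dic_carrier_def)
  ultimately show ?thesis using sq_left[OF n v] by (auto simp: a_d_def)
qed

lemma outer_not_inner:
  assumes n: "n \<ge> 2"
  shows "(restrict (lin_ext n (Dz n)) (ga_carrier n) :: (_ \<Rightarrow> 'a::field) \<Rightarrow> _) \<notin> Der_inn n"
proof
  assume "(restrict (lin_ext n (Dz n)) (ga_carrier n) :: (_ \<Rightarrow> 'a) \<Rightarrow> _) \<in> Der_inn n"
  then obtain \<beta> :: "nat \<times> nat \<Rightarrow> 'a" where b: "\<beta> \<in> ga_carrier n" and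
    eq: "restrict (lin_ext n (Dz n)) (ga_carrier n) = restrict (\<lambda>\<alpha>. ga_sub (ga_mult n \<alpha> \<beta>) (ga_mult n \<beta> \<alpha>)) (ga_carrier n)"
    unfolding Der_inn_def by blast
  have n0: "n > 0" using n by simp
  have aG: "a_d \<in> dic_carrier n" using n by (simp add: a_in)
  have ea: "(eb a_d :: _ \<Rightarrow> 'a) \<in> ga_carrier n" using aG by (rule carrier_eb)
  have "lin_ext n (Dz n) (eb a_d) = ga_sub (ga_mult n (eb a_d) \<beta>) (ga_mult n \<beta> (eb a_d))"
    using fun_cong[OF eq, of "eb a_d"] ea by simp
  then have "lin_ext n (Dz n) (eb a_d) (2, 0) = ga_mult n (eb a_d) \<beta> (2, 0) - ga_mult n \<beta> (eb a_d) (2, 0)"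
    by (simp add: ga_sub_def)
  moreover have "lin_ext n (Dz n) (eb a_d) (2, 0) = (1 :: 'a)"
  proof -
    have "dic_mult n a_d a_d = (2, 0)" using n by (simp add: a_d_def dic_mult_def)
    moreover have "dic_mult n (ai_d n) a_d = (0, 0)" using n by (simp add: a_d_def ai_d_def dic_mult_def)
    ultimately show ?thesis using aG by (simp add: lin_ext_eb Dz_def sc_def eb_apply a_d_def)
  qed
  moreover have "ga_mult n (eb a_d) \<beta> (2, 0) = \<beta> a_d"
  proof -
    have "ga_mult n (eb a_d) \<beta> (2, 0) = (\<Sum>v\<in>dic_carrier n. if v = a_d then \<beta> a_d else 0)"
      unfolding gm_eb_l[OF n0 aG] by (intro sum.cong refl) (use sq_left[OF n] in auto)
    then show ?thesis using aG finG by simp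
  qed
  moreover have "ga_mult n \<beta> (eb a_d) (2, 0) = \<beta> a_d"
  proof -
    have "ga_mult n \<beta> (eb a_d) (2, 0) = (\<Sum>v\<in>dic_carrier n. if v = a_d then \<beta> a_d else 0)"
      unfolding gm_eb_r[OF n0 aG] by (intro sum.cong refl) (use sq_right[OF n] in auto)
    then show ?thesis using aG finG by simp
  qed
  ultimately show False by simp
qed

lemma gm_one_r: "n > 0 \<Longrightarrow> f \<in> ga_carrier n \<Longrightarrow> ga_mult n f (eb one_d) = f"
proof (rule ext)
  fix z assume n: "n > 0" and f: "f \<in> ga_carrier n"
  have "ga_mult n f (eb one_d) z = (\<Sum>u\<in>dic_carrier n. if u = z then f u else 0)"
    unfolding gm_eb_r[OF n one_in[OF n]] by (intro sum.cong refl) (simp add: mul_one_right)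
  also have "\<dots> = f z"
  proof (cases "z \<in> dic_carrier n")
    case True then show ?thesis using finG by simp
  next
    case False
    have "(\<Sum>g\<in>dic_carrier n. if g = z then f g else 0) = 0" using False by (intro sum.neutral) auto
    moreover have "f z = 0" using f False unfolding ga_carrier_def by blast
    ultimately show ?thesis by simp
  qed
  finally show "ga_mult n f (eb one_d) z = f z" .
qed

lemma gm_one_l: "n > 0 \<Longrightarrow> f \<in> ga_carrier n \<Longrightarrow> ga_mult n (eb one_d) f = f"
proof (rule ext)
  fix z assume n: "n > 0" and f: "f \<in> ga_carrier n"
  have "ga_mult n (eb one_d) f z = (\<Sum>u\<in>dic_carrier n. if u = z then f u else 0)"
    unfolding gm_eb_l[OF n one_in[OF n]] by (intro sum.cong refl) (simp add: mul_one_left)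
  also have "\<dots> = f z"
  proof (cases "z \<in> dic_carrier n")
    case True then show ?thesis using finG by simp
  next
    case False
    have "(\<Sum>g\<in>dic_carrier n. if g = z then f g else 0) = 0" using False by (intro sum.neutral) auto
    moreover have "f z = 0" using f False unfolding ga_carrier_def by blast
    ultimately show ?thesis by simp
  qed
  finally show "ga_mult n (eb one_d) f z = f z" .
qed

lemma sum_const_fun: "(\<Sum>g\<in>A. f) = sc (of_nat (card A)) f"
  by (rule ext) (simp add: sum_fun_apply sc_def)

lemma lin_ext_cong: "(\<And>g. g \<in> dic_carrier n \<Longrightarrow> B g = B' g) \<Longrightarrow> lin_ext n B f = lin_ext n B' f"
  unfolding lin_ext_def by (intro sum.cong refl) simp

lemma inner_lin:
  assumes n: "n > 0" and a: "\<alpha> \<in> ga_carrier n" and b: "\<beta> \<in> ga_carrier n"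
  shows "ga_mult n \<alpha> \<beta> - ga_mult n \<beta> \<alpha> = lin_ext n (\<lambda>g. ga_mult n (eb g) \<beta> - ga_mult n \<beta> (eb g)) \<alpha>"
proof -
  have "ga_mult n \<alpha> \<beta> - ga_mult n \<beta> \<alpha> =
    ga_mult n (\<Sum>g\<in>dic_carrier n. sc (\<alpha> g) (eb g)) \<beta> - ga_mult n \<beta> (\<Sum>g\<in>dic_carrier n. sc (\<alpha> g) (eb g))"
    using decomp[OF a] by simp
  also have "\<dots> = lin_ext n (\<lambda>g. ga_mult n (eb g) \<beta> - ga_mult n \<beta> (eb g)) \<alpha>"
    unfolding lin_ext_def gm_sum_l gm_sum_r by (simp add: gm_sc_l gm_sc_r sc_diff sum_subtractf)
  finally show ?thesis .
qed


locale der_ctx =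
  fixes n :: nat and d :: "(nat \<times> nat \<Rightarrow> 'a::field) \<Rightarrow> (nat \<times> nat \<Rightarrow> 'a)"
  assumes n: "n > 0" and dD: "d \<in> Der n"
begin

lemma d_car: "x \<in> ga_carrier n \<Longrightarrow> d x \<in> ga_carrier n"
  using dD unfolding Der_def by blast
lemma d_add: "x \<in> ga_carrier n \<Longrightarrow> y \<in> ga_carrier n \<Longrightarrow> d (x + y) = d x + d y"
  using dD unfolding Der_def by (simp add: ga_add_eq)
lemma d_mul: "x \<in> ga_carrier n \<Longrightarrow> y \<in> ga_carrier n \<Longrightarrow>
    d (ga_mult n x y) = ga_mult n (d x) y + ga_mult n x (d y)"
  using dD unfolding Der_def by (simp add: ga_add_eq)
lemma d_zero: "d 0 = 0"
  using d_add[OF carrier_zero carrier_zero] by simp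
lemma d_sum: "(\<And>i. i \<in> I \<Longrightarrow> F i \<in> ga_carrier n) \<Longrightarrow> d (\<Sum>i\<in>I. F i) = (\<Sum>i\<in>I. d (F i))"
proof (induction I rule: infinite_finite_induct)
  case (insert x A)
  have c1: "F x \<in> ga_carrier n" using insert.prems by simp
  have c2: "(\<Sum>i\<in>A. F i) \<in> ga_carrier n" using insert.prems by (intro carrier_sum) simp
  have "d (\<Sum>i\<in>insert x A. F i) = d (F x + (\<Sum>i\<in>A. F i))" by (simp only: sum.insert[OF insert.hyps])
  also have "\<dots> = d (F x) + d (\<Sum>i\<in>A. F i)" by (rule d_add[OF c1 c2])
  also have "\<dots> = d (F x) + (\<Sum>i\<in>A. d (F i))" using insert.IH insert.prems by simp
  also have "\<dots> = (\<Sum>i\<in>insert x A. d (F i))" by (rule sum.insert[OF insert.hyps, symmetric])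
  finally show ?case .
qed (simp_all add: d_zero)

lemma d_scalar_fder: "fder (\<lambda>c. d (sc c (eb one_d)) z)"
proof
  have e1: "eb one_d \<in> ga_carrier n" using one_in[OF n] by (rule carrier_eb)
  fix x y :: 'a
  show "d (sc (x + y) (eb one_d)) z = d (sc x (eb one_d)) z + d (sc y (eb one_d)) z"
    by (simp add: sc_add_scalar d_add carrier_sc e1)
  have "sc (x * y) (eb one_d) = ga_mult n (sc x (eb one_d)) (sc y (eb one_d))"
    using n one_in[OF n] by (simp add: gm_eb_sc mul_one_left)
  then have "d (sc (x * y) (eb one_d)) = ga_mult n (d (sc x (eb one_d))) (sc y (eb one_d)) + ga_mult n (sc x (eb one_d)) (d (sc y (eb one_d)))"
    by (simp add: d_mul carrier_sc e1)
  also have "\<dots> = sc y (d (sc x (eb one_d))) + sc x (d (sc y (eb one_d)))"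
    by (simp add: gm_sc_l gm_sc_r gm_one_r gm_one_l n d_car carrier_sc e1)
  finally show "d (sc (x * y) (eb one_d)) z = x * d (sc y (eb one_d)) z + y * d (sc x (eb one_d)) z"
    by (simp add: sc_def)
qed

lemma d_scalar_zero:
  assumes fz: "\<forall>D::'a\<Rightarrow>'a. fder D \<longrightarrow> (\<forall>x. D x = 0)"
  shows "d (sc c (eb one_d)) = 0"
proof (rule ext)
  fix z
  have "fder (\<lambda>c. d (sc c (eb one_d)) z)" by (rule d_scalar_fder)
  then have "\<forall>x. (\<lambda>c. d (sc c (eb one_d)) z) x = 0" using fz by blast
  then show "d (sc c (eb one_d)) z = 0 z" by simp
qed

lemma d_sc:
  assumes fz: "\<forall>D::'a\<Rightarrow>'a. fder D \<longrightarrow> (\<forall>x. D x = 0)" and f: "f \<in> ga_carrier n"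
  shows "d (sc c f) = sc c (d f)"
proof -
  have e1: "eb one_d \<in> ga_carrier n" using one_in[OF n] by (rule carrier_eb)
  have "sc c f = ga_mult n (sc c (eb one_d)) f" using n f by (simp add: gm_sc_l gm_one_l)
  then have "d (sc c f) = ga_mult n (d (sc c (eb one_d))) f + ga_mult n (sc c (eb one_d)) (d f)"
    by (simp add: d_mul carrier_sc e1 f)
  also have "\<dots> = sc c (d f)"
    using n f by (simp add: d_scalar_zero[OF fz] gm_zero_l gm_sc_l gm_one_l d_car)
  finally show ?thesis .
qed

lemma d_lin:
  assumes fz: "\<forall>D::'a\<Rightarrow>'a. fder D \<longrightarrow> (\<forall>x. D x = 0)" and a: "\<alpha> \<in> ga_carrier n"
  shows "d \<alpha> = lin_ext n (\<lambda>g. d (eb g)) \<alpha>"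
proof -
  have "d \<alpha> = d (\<Sum>g\<in>dic_carrier n. sc (\<alpha> g) (eb g))" using decomp[OF a] by simp
  also have "\<dots> = (\<Sum>g\<in>dic_carrier n. d (sc (\<alpha> g) (eb g)))"
    by (rule d_sum) (simp add: carrier_sc carrier_eb)
  also have "\<dots> = lin_ext n (\<lambda>g. d (eb g)) \<alpha>"
    unfolding lin_ext_def by (intro sum.cong refl) (simp add: d_sc[OF fz] carrier_eb)
  finally show ?thesis .
qed


lemma mul_inv_bij: assumes h: "h \<in> dic_carrier n"
  shows "bij_betw (dic_mult n (inv_d n h)) (dic_carrier n) (dic_carrier n)"
proof (rule bij_betwI[where g = "dic_mult n h"])
  show "dic_mult n (inv_d n h) \<in> dic_carrier n \<rightarrow> dic_carrier n" using mul_closed[OF n] by auto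
  show "dic_mult n h \<in> dic_carrier n \<rightarrow> dic_carrier n" using mul_closed[OF n] by auto
  fix x assume x: "x \<in> dic_carrier n"
  show "dic_mult n h (dic_mult n (inv_d n h) x) = x"
    using n h x by (simp add: mul_assoc[symmetric] inv_in mul_inv_right mul_one_left)
  show "dic_mult n (inv_d n h) (dic_mult n h x) = x"
    using n h x by (simp add: mul_assoc[symmetric] inv_in mul_inv_left mul_one_left)
qed

lemma d_basis_inner:
  assumes N: "of_nat (card (dic_carrier n)) \<noteq> (0::'a)" and h: "h \<in> dic_carrier n"
  defines "\<gamma> \<equiv> (\<Sum>g\<in>dic_carrier n. ga_mult n (d (eb g)) (eb (inv_d n g)))"
  shows "d (eb h) = ga_mult n (eb h) (sc (- inverse (of_nat (card (dic_carrier n)))) \<gamma>)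
                  - ga_mult n (sc (- inverse (of_nat (card (dic_carrier n)))) \<gamma>) (eb h)"
proof -
  let ?G = "dic_carrier n"
  let ?N = "of_nat (card ?G) :: 'a"
  have eG: "\<And>g. g \<in> ?G \<Longrightarrow> (eb g :: _ \<Rightarrow> 'a) \<in> ga_carrier n" by (rule carrier_eb)
  have deG: "\<And>g. g \<in> ?G \<Longrightarrow> d (eb g) \<in> ga_carrier n" using eG d_car by blast
  have iG: "\<And>g. inv_d n g \<in> ?G" using n by (rule inv_in)
  have hG: "(eb h :: _ \<Rightarrow> 'a) \<in> ga_carrier n" using h by (rule eG)
  have S1: "ga_mult n (eb h) \<gamma> = (\<Sum>g\<in>?G. ga_mult n (ga_mult n (eb h) (d (eb g))) (eb (inv_d n g)))"
    unfolding \<gamma>_def gm_sum_r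
    by (intro sum.cong refl) (simp add: gm_assoc[OF n hG deG eG[OF iG]])
  have S2: "ga_mult n (eb h) (d (eb g)) = d (eb (dic_mult n h g)) - ga_mult n (d (eb h)) (eb g)" if g: "g \<in> ?G" for g
  proof -
    have "d (eb (dic_mult n h g)) = d (ga_mult n (eb h) (eb g))" using n h g by (simp add: gm_eb_eb)
    also have "\<dots> = ga_mult n (d (eb h)) (eb g) + ga_mult n (eb h) (d (eb g))" by (rule d_mul[OF hG eG[OF g]])
    finally show ?thesis by simp
  qed
  have S3: "ga_mult n (ga_mult n (d (eb h)) (eb g)) (eb (inv_d n g)) = d (eb h)" if g: "g \<in> ?G" for g
    using n g h by (simp add: gm_assoc deG eG iG gm_eb_eb mul_inv_right gm_one_r)
  have S4: "(\<Sum>g\<in>?G. ga_mult n (d (eb (dic_mult n h g))) (eb (inv_d n g))) = ga_mult n \<gamma> (eb h)"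
  proof -
    have "(\<Sum>g\<in>?G. ga_mult n (d (eb (dic_mult n h g))) (eb (inv_d n g)))
        = (\<Sum>k\<in>?G. ga_mult n (d (eb (dic_mult n h (dic_mult n (inv_d n h) k)))) (eb (inv_d n (dic_mult n (inv_d n h) k))))"
      by (rule sum.reindex_bij_betw[OF mul_inv_bij[OF h], symmetric])
    also have "\<dots> = (\<Sum>k\<in>?G. ga_mult n (ga_mult n (d (eb k)) (eb (inv_d n k))) (eb h))"
    proof (intro sum.cong refl)
      fix k assume k: "k \<in> ?G"
      have m1: "dic_mult n h (dic_mult n (inv_d n h) k) = k"
        using n h k by (simp add: mul_assoc[symmetric] inv_in mul_inv_right mul_one_left)
      have "dic_mult n (dic_mult n (inv_d n k) h) (dic_mult n (inv_d n h) k) = one_d"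
        using n h k m1 by (simp add: mul_assoc inv_in mul_closed mul_inv_left)
      then have m2: "inv_d n (dic_mult n (inv_d n h) k) = dic_mult n (inv_d n k) h"
        using n h k by (intro inv_unique[symmetric]) (simp_all add: mul_closed inv_in)
      show "ga_mult n (d (eb (dic_mult n h (dic_mult n (inv_d n h) k)))) (eb (inv_d n (dic_mult n (inv_d n h) k)))
          = ga_mult n (ga_mult n (d (eb k)) (eb (inv_d n k))) (eb h)"
        unfolding m1 m2 using n h k by (simp add: gm_assoc deG eG iG gm_eb_eb)
    qed
    also have "\<dots> = ga_mult n \<gamma> (eb h)" unfolding \<gamma>_def gm_sum_l ..
    finally show ?thesis .
  qed
  have S5: "ga_mult n (eb h) \<gamma> = ga_mult n \<gamma> (eb h) - sc ?N (d (eb h))"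
  proof -
    have "ga_mult n (eb h) \<gamma> = (\<Sum>g\<in>?G. ga_mult n (d (eb (dic_mult n h g))) (eb (inv_d n g))
                 - ga_mult n (ga_mult n (d (eb h)) (eb g)) (eb (inv_d n g)))"
      unfolding S1 by (intro sum.cong refl) (simp add: S2 gm_diff_l)
    also have "\<dots> = ga_mult n \<gamma> (eb h) - (\<Sum>g\<in>?G. d (eb h))"
      by (simp add: sum_subtractf S4 S3)
    finally show ?thesis by (simp only: sum_const_fun)
  qed
  show ?thesis
    unfolding gm_sc_l gm_sc_r S5
    using N by (simp add: sc_def fun_eq_iff algebra_simps)
qed

lemma all_inner:
  assumes fz: "\<forall>D::'a\<Rightarrow>'a. fder D \<longrightarrow> (\<forall>x. D x = 0)"
    and N: "of_nat (card (dic_carrier n)) \<noteq> (0::'a)"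
  shows "d \<in> Der_inn n"
proof -
  define \<gamma> where "\<gamma> = (\<Sum>g\<in>dic_carrier n. ga_mult n (d (eb g)) (eb (inv_d n g)))"
  define \<beta> where "\<beta> = sc (- inverse (of_nat (card (dic_carrier n)))) \<gamma>"
  have gC: "\<gamma> \<in> ga_carrier n" unfolding \<gamma>_def by (rule carrier_sum, rule gm_carrier[OF n])
  have bC: "\<beta> \<in> ga_carrier n" unfolding \<beta>_def by (rule carrier_sc[OF gC])
  have dext: "d \<in> extensional (ga_carrier n)" using dD unfolding Der_def by blast
  have eq: "d = restrict (\<lambda>\<alpha>. ga_sub (ga_mult n \<alpha> \<beta>) (ga_mult n \<beta> \<alpha>)) (ga_carrier n)"
  proof (rule ext)
    fix \<alpha>
    show "d \<alpha> = restrict (\<lambda>\<alpha>. ga_sub (ga_mult n \<alpha> \<beta>) (ga_mult n \<beta> \<alpha>)) (ga_carrier n) \<alpha>"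
    proof (cases "\<alpha> \<in> ga_carrier n")
      case True
      have "d \<alpha> = lin_ext n (\<lambda>g. d (eb g)) \<alpha>" by (rule d_lin[OF fz True])
      also have "\<dots> = lin_ext n (\<lambda>g. ga_mult n (eb g) \<beta> - ga_mult n \<beta> (eb g)) \<alpha>"
        unfolding \<beta>_def \<gamma>_def by (rule lin_ext_cong, rule d_basis_inner[OF N])
      also have "\<dots> = ga_mult n \<alpha> \<beta> - ga_mult n \<beta> \<alpha>" by (rule inner_lin[OF n True bC, symmetric])
      finally show ?thesis using True by (simp add: ga_sub_eq)
    next
      case False
      then show ?thesis by (simp add: extensional_arb[OF dext False])
    qed
  qed
  show ?thesis unfolding Der_inn_def by (rule CollectI, rule exI[of _ \<beta>], rule conjI[OF eq bC])
qed

end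


lemma card_G: "card (dic_carrier n) = 4 * n"
  by (simp add: dic_carrier_def card_cartesian_product)

theorem corollary4p6:
  fixes n p :: nat
  assumes "n \<ge> 2"
    and "algebraic_over_prime_field TYPE('a::field)"
    and "prime p" and "odd p"
  shows "((CHAR('a) = 0 \<or> (CHAR('a) = p \<and> coprime n p)) \<longrightarrow>
            (Der n :: ((nat \<times> nat \<Rightarrow> 'a) \<Rightarrow> _) set) = Der_inn n)
       \<and> ((CHAR('a) = p \<and> \<not> coprime n p) \<longrightarrow>
            (Der_inn n :: ((nat \<times> nat \<Rightarrow> 'a) \<Rightarrow> _) set) \<subset> Der n)"
proof (intro conjI impI)
  have n0: "n > 0" using assms(1) by simp
  have n1: "n \<ge> 1" using assms(1) by simp
  have inn_sub: "(Der_inn n :: ((nat \<times> nat \<Rightarrow> 'a) \<Rightarrow> _) set) \<subseteq> Der n"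
    unfolding Der_inn_def using inner_in_Der[OF n0] by blast
  {
    assume ch: "CHAR('a) = 0 \<or> (CHAR('a) = p \<and> coprime n p)"
    have chp: "CHAR('a) = 0 \<or> prime CHAR('a)" using ch assms(3) by auto
    have fz: "\<forall>D::'a\<Rightarrow>'a. fder D \<longrightarrow> (\<forall>x. D x = 0)"
      using field_der_zero[OF _ assms(2) chp] by blast
    have N: "of_nat (card (dic_carrier n)) \<noteq> (0::'a)"
    proof
      assume "of_nat (card (dic_carrier n)) = (0::'a)"
      then have "of_nat (4 * n) = (0::'a)" by (simp only: card_G)
      then have dv: "CHAR('a) dvd 4 * n" by (simp only: of_nat_eq_0_iff_char_dvd)
      show False using ch
      proof
        assume "CHAR('a) = 0" then show False using dv n0 by simp
      next
        assume c: "CHAR('a) = p \<and> coprime n p"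
        then have "p dvd 4 * n" using dv by simp
        then have "p dvd 4 \<or> p dvd n" using assms(3) by (simp add: prime_dvd_mult_iff)
        then show False
        proof
          assume "p dvd 4"
          then have "p dvd 2 * 2" by simp
          then have "p dvd 2" using assms(3) by (metis prime_dvd_mult_iff)
          then have "p \<le> 2" by (simp add: dvd_imp_le)
          moreover have "p \<ge> 2" using assms(3) by (simp add: prime_ge_2_nat)
          ultimately have "p = 2" by simp
          then show False using assms(4) by simp
        next
          assume "p dvd n"
          then have "p dvd gcd n p" by simp
          then have "p dvd 1" using c by simp
          then show False using assms(3) by simp
        qed
      qed
    qed
    show "(Der n :: ((nat \<times> nat \<Rightarrow> 'a) \<Rightarrow> _) set) = Der_inn n"
    proof
      show "(Der n :: ((nat \<times> nat \<Rightarrow> 'a) \<Rightarrow> _) set) \<subseteq> Der_inn n"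
      proof
        fix d :: "(nat \<times> nat \<Rightarrow> 'a) \<Rightarrow> _" assume "d \<in> Der n"
        then interpret der_ctx n d using n0 by unfold_locales
        show "d \<in> Der_inn n" by (rule all_inner[OF fz N])
      qed
    qed (rule inn_sub)
  }
  {
    assume ch: "CHAR('a) = p \<and> \<not> coprime n p"
    have "p dvd n" using ch assms(3) by (metis coprime_commute prime_imp_coprime)
    then have c0: "of_nat n = (0::'a)" using ch by (simp add: of_nat_eq_0_iff_char_dvd)
    show "(Der_inn n :: ((nat \<times> nat \<Rightarrow> 'a) \<Rightarrow> _) set) \<subset> Der n"
      using inn_sub outer_in_Der[OF n1 c0] outer_not_inner[OF assms(1)] by blast
  }
qed

end
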